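(* For any $q\ge1$, let $u_{n,q}$ (resp. $v_{n,q}$) be the total number of occurrences of the letter $1$ in all words of $\mathcal{W}^q_n$ (resp. of $\mathcal{B}_n(1^{q+1})$). Then $$\lim_{n\to\infty}\frac{u_{n,q}-v_{n,q}}{n\cdot f_{n+q+1,q+1}}=0.$$
   Context: For $q\ge1$, a binary word is $q$-decreasing if for every maximal run of $0$s, of length $a>0$, together with the (possibly empty) maximal run of $1$s immediately following it, of length $b$, one has $q\cdot a>b$; $\mathcal{W}^q_n$ is the set of $q$-decreasing words of length $n$. $\mathcal{B}_n(1^{q+1})$ is the set of binary words of length $n$ with no factor $1^{q+1}$. The $k$-generalized Fibonacci numbers are $f_{n,k}=0$ for $0\le n\le k-2$, $f_{k-1,k}=1$, and $f_{n,k}=\sum_{i=1}^kf_{n-i,k}$ for $n\ge k$. *)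

theory Defs
  imports Complex_Main "HOL-Library.Sublist"
begin

text \<open>Binary words are modelled as bool lists: True is the letter 1, False the letter 0.\<close>

text \<open>q-decreasing: every maximal 0-run w[i..<j] (length a = j - i > 0) together with the
  maximal 1-run w[j..<k] immediately following it (length b = k - j, possibly 0)
  satisfies q * a > b.\<close>
definition q_decreasing :: "nat \<Rightarrow> bool list \<Rightarrow> bool" where
  "q_decreasing q w \<longleftrightarrow>
     (\<forall>i j k. i < j \<and> j \<le> k \<and> k \<le> length w
        \<and> (i = 0 \<or> w ! (i - 1))
        \<and> (\<forall>t\<in>{i..<j}. \<not> w ! t)
        \<and> (\<forall>t\<in>{j..<k}. w ! t)
        \<and> (k = length w \<or> \<not> w ! k)
        \<and> (j = k \<longrightarrow> k = length w)
        \<longrightarrow> q * (j - i) > k - j)"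

definition W :: "nat \<Rightarrow> nat \<Rightarrow> bool list set" where
  "W q n = {w. length w = n \<and> q_decreasing q w}"

definition B :: "nat \<Rightarrow> nat \<Rightarrow> bool list set" where
  "B q n = {w. length w = n \<and> \<not> sublist (replicate (q + 1) True) w}"

definition u :: "nat \<Rightarrow> nat \<Rightarrow> nat" where
  "u n q = (\<Sum>w\<in>W q n. count_list w True)"

definition v :: "nat \<Rightarrow> nat \<Rightarrow> nat" where
  "v n q = (\<Sum>w\<in>B q n. count_list w True)"

function kfib :: "nat \<Rightarrow> nat \<Rightarrow> nat" where
  "kfib n k = (if n + 1 < k then 0 else if n + 1 = k then 1
               else (\<Sum>i\<in>{1..k}. kfib (n - i) k))"
  by auto
termination
  by (relation "measure fst") auto

end

theory Submission
  imports Defs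
begin


definition tz :: "bool list \<Rightarrow> nat" where "tz x = length (takeWhile Not (rev x))"

lemma tz_le: "tz x \<le> length x"
  unfolding tz_def by (metis length_rev length_takeWhile_le)

lemma tz_zero: assumes "length x - tz x \<le> t" "t < length x" shows "\<not> x ! t"
proof -
  define s where "s = length x - Suc t"
  have s: "s < tz x" using assms tz_le[of x] unfolding s_def by linarith
  have "takeWhile Not (rev x) ! s = rev x ! s" using s unfolding tz_def by (rule takeWhile_nth)
  moreover have "takeWhile Not (rev x) ! s \<in> set (takeWhile Not (rev x))" using s unfolding tz_def by simp
  ultimately have "\<not> rev x ! s" by (metis set_takeWhileD)
  moreover have "rev x ! s = x ! t" using assms unfolding s_def by (simp add: rev_nth)
  ultimately show ?thesis by simp
qed

lemma tz_one: assumes "tz x < length x" shows "x ! (length x - 1 - tz x)"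
proof -
  have "\<not> Not (rev x ! tz x)" using assms unfolding tz_def by (metis length_rev nth_length_takeWhile)
  moreover have "rev x ! tz x = x ! (length x - 1 - tz x)" using assms by (simp add: rev_nth)
  ultimately show ?thesis by simp
qed

lemma tz_F[simp]: "tz (x @ [False]) = Suc (tz x)" by (simp add: tz_def)
lemma tz_T[simp]: "tz (x @ [True]) = 0" by (simp add: tz_def)

lemma qdD: assumes "q_decreasing q w" "i < j" "j \<le> k" "k \<le> length w" "i = 0 \<or> w!(i-1)"
  "\<forall>t\<in>{i..<j}. \<not> w!t" "\<forall>t\<in>{j..<k}. w!t" "k = length w \<or> \<not> w!k" "j = k \<longrightarrow> k = length w"
  shows "k - j < q*(j-i)" using assms unfolding q_decreasing_def by blast

lemma KL:
  fixes x :: "bool list"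
  assumes q: "q \<ge> 1"
  shows "q_decreasing q (x @ False # replicate j True) \<longleftrightarrow> q_decreasing q x \<and> j < q * (1 + tz x)"
proof -
  define w where "w = x @ False # replicate j True"
  define L where "L = length x"
  have lw: "length w = L + 1 + j" by (simp add: w_def L_def)
  have wn: "\<And>t. t < length w \<Longrightarrow> w ! t = (if t < L then x ! t else if t = L then False else True)"
    by (auto simp: w_def L_def nth_append nth_Cons split: nat.split)
  have tzL: "tz x \<le> L" using tz_le L_def by simp
  show ?thesis unfolding w_def[symmetric]
  proof
    assume H: "q_decreasing q w"
    have A: "q_decreasing q x"
      unfolding q_decreasing_def
    proof (intro allI impI)
      fix i j' k assume c: "i < j' \<and> j' \<le> k \<and> k \<le> length x \<and> (i = 0 \<or> x ! (i - 1))
        \<and> (\<forall>t\<in>{i..<j'}. \<not> x ! t) \<and> (\<forall>t\<in>{j'..<k}. x ! t) \<and> (k = length x \<or> \<not> x ! k)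
        \<and> (j' = k \<longrightarrow> k = length x)"
      show "k - j' < q * (j' - i)"
      proof (cases "j' = k")
        case True then show ?thesis using c q by simp
      next
        case False
        have c1: "i < j'" "j' < k" "k \<le> L" using c False L_def by auto
        have "i = 0 \<or> w ! (i - 1)" using c c1 wn lw by auto
        moreover have "\<forall>t\<in>{i..<j'}. \<not> w ! t" using c c1 wn lw by auto
        moreover have "\<forall>t\<in>{j'..<k}. w ! t" using c c1 wn lw by auto
        moreover have "k = length w \<or> \<not> w ! k"
        proof (cases "k = L")
          case True then show ?thesis using wn lw by auto
        next
          case False then show ?thesis using c c1 wn lw L_def by auto
        qed
        ultimately show ?thesis using qdD[OF H, of i j' k] c1 lw False by simp
      qed
    qed
    have B: "j < q * (1 + tz x)"
    proof -
      define i where "i = L - tz x"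
      have "i = 0 \<or> w ! (i - 1)"
      proof (cases "tz x < L")
        case True
        have "x ! (L - 1 - tz x)" using tz_one True L_def by simp
        moreover have "L - 1 - tz x = i - 1" using i_def by simp
        ultimately show ?thesis using wn lw True i_def by auto
      next
        case False then show ?thesis using i_def tzL by simp
      qed
      moreover have "\<forall>t\<in>{i..<L+1}. \<not> w ! t"
      proof
        fix t assume t: "t \<in> {i..<L+1}"
        show "\<not> w ! t"
        proof (cases "t < L")
          case True then show ?thesis using tz_zero[of x t] t i_def L_def wn lw by auto
        next
          case False then show ?thesis using t wn lw by auto
        qed
      qed
      moreover have "\<forall>t\<in>{L+1..<length w}. w ! t" using wn lw by auto
      moreover have "i < L + 1" using i_def by simp
      ultimately have "length w - (L+1) < q * (L + 1 - i)"
        using qdD[OF H, of i "L+1" "length w"] lw by simp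
      then show ?thesis using lw i_def tzL by simp
    qed
    show "q_decreasing q x \<and> j < q * (1 + tz x)" using A B by simp
  next
    assume H: "q_decreasing q x \<and> j < q * (1 + tz x)"
    show "q_decreasing q w"
      unfolding q_decreasing_def
    proof (intro allI impI)
      fix i j' k assume c: "i < j' \<and> j' \<le> k \<and> k \<le> length w \<and> (i = 0 \<or> w ! (i - 1))
        \<and> (\<forall>t\<in>{i..<j'}. \<not> w ! t) \<and> (\<forall>t\<in>{j'..<k}. w ! t) \<and> (k = length w \<or> \<not> w ! k)
        \<and> (j' = k \<longrightarrow> k = length w)"
      show "k - j' < q * (j' - i)"
      proof (cases "k \<le> L")
        case True
        have c1: "j' < k" using c True lw by auto
        have "i = 0 \<or> x ! (i - 1)" using c c1 True wn lw by auto
        moreover have "\<forall>t\<in>{i..<j'}. \<not> x ! t" using c c1 True wn lw by auto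
        moreover have "\<forall>t\<in>{j'..<k}. x ! t" using c c1 True wn lw by auto
        moreover have "k = L \<or> \<not> x ! k" using c c1 True wn lw by auto
        ultimately show ?thesis using qdD[of q x i j' k] H c c1 True L_def by simp
      next
        case False
        have j1: "L < j'"
        proof (rule ccontr)
          assume "\<not> L < j'"
          then have "L \<in> {j'..<k}" using False by auto
          then have "w ! L" using c by auto
          then show False using wn lw by simp
        qed
        have i1: "i \<le> L"
        proof (rule ccontr)
          assume "\<not> i \<le> L"
          then have "i \<in> {i..<j'}" "i < length w" using c by auto
          then have "\<not> w ! i" using c by blast
          then show False using wn \<open>i < length w\<close> \<open>\<not> i \<le> L\<close> by auto
        qed
        have j2: "j' = L + 1"
        proof (rule ccontr)
          assume "j' \<noteq> L + 1"
          then have "L + 1 \<in> {i..<j'}" using i1 j1 by auto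
          then have "\<not> w ! (L+1)" using c by blast
          moreover have "L + 1 < length w" using \<open>j' \<noteq> L + 1\<close> j1 c by auto
          ultimately show False using wn by auto
        qed
        have i2: "i \<le> L - tz x"
        proof (rule ccontr)
          assume a: "\<not> i \<le> L - tz x"
          then have "i \<noteq> 0" by simp
          then have "w ! (i - 1)" using c by simp
          moreover have "i - 1 < L" using i1 a by simp
          moreover have "\<not> x ! (i - 1)" using tz_zero[of x "i-1"] a i1 L_def by simp
          ultimately show False using wn lw by auto
        qed
        have "k \<le> length w" using c by (elim conjE)
        then have "k - j' \<le> j" using lw j2 by simp
        also have "j < q * (1 + tz x)" using H by simp
        also have "\<dots> \<le> q * (j' - i)" using j2 i2 tzL by (intro mult_le_mono2) simp
        finally show ?thesis .
      qed
    qed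
  qed
qed



abbreviation Lw :: "nat \<Rightarrow> bool list set" where "Lw m \<equiv> {x. length x = m}"

lemma finL: "finite (Lw m)"
  using finite_lists_length_eq[of "UNIV :: bool set" m] by simp

lemma SNOC: "(\<Sum>x\<in>Lw (Suc n). h x) = (\<Sum>x\<in>Lw n. h (x@[False])) + (\<Sum>x\<in>Lw n. (h (x@[True]) :: 'a::comm_monoid_add))"
proof -
  have e: "Lw (Suc n) = (\<lambda>x. x@[False]) ` Lw n \<union> (\<lambda>x. x@[True]) ` Lw n"
  proof
    show "Lw (Suc n) \<subseteq> (\<lambda>x. x@[False]) ` Lw n \<union> (\<lambda>x. x@[True]) ` Lw n"
    proof
      fix w assume w: "w \<in> Lw (Suc n)"
      then have "w \<noteq> []" by auto
      then have e: "w = butlast w @ [last w]" by simp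
      have b: "butlast w \<in> Lw n" using w by simp
      show "w \<in> (\<lambda>x. x@[False]) ` Lw n \<union> (\<lambda>x. x@[True]) ` Lw n"
      proof (cases "last w")
        case True
        then have "w = butlast w @ [True]" using e by simp
        then have "w \<in> (\<lambda>x. x@[True]) ` Lw n" using b by (rule image_eqI)
        then show ?thesis by (rule UnI2)
      next
        case False
        then have "w = butlast w @ [False]" using e by simp
        then have "w \<in> (\<lambda>x. x@[False]) ` Lw n" using b by (rule image_eqI)
        then show ?thesis by (rule UnI1)
      qed
    qed
  qed auto
  have d: "(\<lambda>x. x@[False]) ` Lw n \<inter> (\<lambda>x. x@[True]) ` Lw n = {}" by auto
  have i1: "inj_on (\<lambda>x. x@[False]) (Lw n)" by (auto simp: inj_on_def)
  have i2: "inj_on (\<lambda>x. x@[True]) (Lw n)" by (auto simp: inj_on_def)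
  show ?thesis unfolding e
    by (subst sum.union_disjoint) (auto simp: finL sum.reindex[OF i1] sum.reindex[OF i2] d)
qed

lemma GEN: "(\<Sum>w\<in>Lw n. f w) = f (replicate n True) + (\<Sum>j<n. \<Sum>x\<in>Lw (n-1-j). (f (x @ False # replicate j True) :: 'a::comm_monoid_add))"
proof (induction n arbitrary: f)
  case 0
  have "Lw 0 = {[]}" by auto
  then show ?case by simp
next
  case (Suc n)
  have "(\<Sum>w\<in>Lw (Suc n). f w) = (\<Sum>x\<in>Lw n. f (x@[False])) + (\<Sum>x\<in>Lw n. f (x@[True]))"
    by (rule SNOC)
  also have "(\<Sum>x\<in>Lw n. f (x@[True])) = f (replicate n True @ [True]) + (\<Sum>j<n. \<Sum>x\<in>Lw (n-1-j). f ((x @ False # replicate j True) @ [True]))"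
    by (rule Suc.IH)
  also have "replicate n True @ [True] = replicate (Suc n) True" by (simp add: replicate_append_same)
  also have "(\<Sum>j<n. \<Sum>x\<in>Lw (n-1-j). f ((x @ False # replicate j True) @ [True])) = (\<Sum>j<n. \<Sum>x\<in>Lw (n-Suc j). f (x @ False # replicate (Suc j) True))"
    by (simp add: replicate_append_same[symmetric])
  finally have X: "(\<Sum>w\<in>Lw (Suc n). f w) = (\<Sum>x\<in>Lw n. f (x@[False])) + (f (replicate (Suc n) True) + (\<Sum>j<n. \<Sum>x\<in>Lw (n-Suc j). f (x @ False # replicate (Suc j) True)))" .
  have Y: "(\<Sum>j<Suc n. \<Sum>x\<in>Lw (Suc n-1-j). f (x @ False # replicate j True)) = (\<Sum>x\<in>Lw n. f (x@[False])) + (\<Sum>j<n. \<Sum>x\<in>Lw (n-Suc j). f (x @ False # replicate (Suc j) True))"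
    by (subst sum.lessThan_Suc_shift) simp
  show ?case unfolding Y X by (simp only: ac_simps)
qed

definition WS :: "(bool list \<Rightarrow> bool) \<Rightarrow> (bool list \<Rightarrow> int) \<Rightarrow> nat \<Rightarrow> int" where
  "WS P g n = (\<Sum>x\<in>Lw n. if P x then g x else 0)"

lemma sum_split_add: "(\<Sum>j<(a::nat)+b. f j) = (\<Sum>j<a. f j) + (\<Sum>i<b. (f (a+i) :: 'a::comm_monoid_add))"
  by (induction b) (simp_all add: add_ac)

lemma qd_rep: "q_decreasing q (replicate n True)"
  unfolding q_decreasing_def
proof (intro allI impI)
  fix i j k assume c: "i < j \<and> j \<le> k \<and> k \<le> length (replicate n True) \<and> (i = 0 \<or> replicate n True ! (i - 1))
        \<and> (\<forall>t\<in>{i..<j}. \<not> replicate n True ! t) \<and> (\<forall>t\<in>{j..<k}. replicate n True ! t) \<and> (k = length (replicate n True) \<or> \<not> replicate n True ! k)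
        \<and> (j = k \<longrightarrow> k = length (replicate n True))"
  then have "i \<in> {i..<j}" "i < n" by auto
  then have "\<not> replicate n True ! i" using c by blast
  then show "k - j < q * (j - i)" using \<open>i < n\<close> by simp
qed

lemma KL2: assumes "q \<ge> 1"
  shows "q_decreasing q (y @ False # False # replicate (q+i) True) \<longleftrightarrow> q_decreasing q (y @ False # replicate i True)"
proof -
  have "q_decreasing q ((y @ [False]) @ False # replicate (q+i) True) \<longleftrightarrow> q_decreasing q (y @ [False]) \<and> q + i < q * (1 + tz (y @ [False]))"
    by (rule KL[OF assms])
  also have "q_decreasing q (y @ [False]) \<longleftrightarrow> q_decreasing q y"
    using KL[OF assms, of y 0] assms by simp
  also have "q + i < q * (1 + tz (y @ [False])) \<longleftrightarrow> i < q * (1 + tz y)" by simp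
  finally show ?thesis using KL[OF assms, of y i] by simp
qed

lemma Wrec:
  assumes q: "q \<ge> 1"
    and gg: "\<And>y i. g (y @ False # False # replicate (q+i) True) = g' (y @ False # replicate i True)"
  shows "WS (q_decreasing q) g (m+q+1) + g' (replicate m True) =
     g (replicate (m+q+1) True) + (\<Sum>j<q. WS (q_decreasing q) (\<lambda>x. g (x @ False # replicate j True)) (m+q-j)) + WS (q_decreasing q) g' m"
proof -
  let ?P = "q_decreasing q"
  define T where "T j = (\<Sum>x\<in>Lw (m+q-j). if ?P (x @ False # replicate j True) then g (x @ False # replicate j True) else 0)" for j
  have "WS ?P g (m+q+1) = g (replicate (m+q+1) True) + (\<Sum>j<q+(m+1). T j)"
    unfolding WS_def T_def using qd_rep[of q "Suc (m+q)", simplified] by (subst GEN) (simp add: qd_rep add_ac)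
  also have "(\<Sum>j<q+(m+1). T j) = (\<Sum>j<q. T j) + (\<Sum>i<m+1. T (q+i))" by (rule sum_split_add)
  also have "(\<Sum>j<q. T j) = (\<Sum>j<q. WS ?P (\<lambda>x. g (x @ False # replicate j True)) (m+q-j))"
  proof (rule sum.cong)
    fix j assume "j \<in> {..<q}"
    then have "\<And>x. ?P (x @ False # replicate j True) \<longleftrightarrow> ?P x" using KL[OF q] by (simp add: less_le_trans[of j q])
    then show "T j = WS ?P (\<lambda>x. g (x @ False # replicate j True)) (m+q-j)"
      unfolding T_def WS_def by simp
  qed simp
  also have "(\<Sum>i<m+1. T (q+i)) = (\<Sum>i<m. \<Sum>y\<in>Lw (m-1-i). if ?P (y @ False # replicate i True) then g' (y @ False # replicate i True) else 0)"
  proof -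
    have "T (q+m) = 0"
    proof -
      have "Lw 0 = {[]}" by auto
      moreover have "\<not> ?P ([] @ False # replicate (q+m) True)" using KL[OF q, of "[]" "q+m"] by (simp add: tz_def)
      ultimately show ?thesis unfolding T_def by simp
    qed
    moreover have "T (q+i) = (\<Sum>y\<in>Lw (m-1-i). if ?P (y @ False # replicate i True) then g' (y @ False # replicate i True) else 0)"
      if i: "i < m" for i
    proof -
      have e: "m + q - (q+i) = Suc (m-1-i)" using i by simp
      have "T (q+i) = (\<Sum>y\<in>Lw (m-1-i). if ?P ((y@[False]) @ False # replicate (q+i) True) then g ((y@[False]) @ False # replicate (q+i) True) else 0)
          + (\<Sum>y\<in>Lw (m-1-i). if ?P ((y@[True]) @ False # replicate (q+i) True) then g ((y@[True]) @ False # replicate (q+i) True) else 0)"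
        unfolding T_def e by (rule SNOC)
      also have "(\<Sum>y\<in>Lw (m-1-i). if ?P ((y@[True]) @ False # replicate (q+i) True) then g ((y@[True]) @ False # replicate (q+i) True) else 0) = 0"
        using KL[OF q, of "y@[True]" "q+i" for y] by (intro sum.neutral) simp
      finally have Z: "T (q+i) = (\<Sum>y\<in>Lw (m-1-i). if ?P ((y@[False]) @ False # replicate (q+i) True) then g ((y@[False]) @ False # replicate (q+i) True) else 0)" by simp
      show ?thesis unfolding Z append_assoc append_Cons append_Nil using KL2[OF q] by (intro sum.cong refl) (simp add: gg)
    qed
    ultimately show ?thesis by simp
  qed
  also have "\<dots> = WS ?P g' m - g' (replicate m True)"
    unfolding WS_def by (subst (2) GEN) (simp add: qd_rep)
  finally show ?thesis by simp
qed


lemma subl_rep: "sublist (replicate (Suc q) True) (replicate j True) \<longleftrightarrow> Suc q \<le> j"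
proof
  assume "sublist (replicate (Suc q) True) (replicate j True)"
  then show "Suc q \<le> j" using sublist_length_le by fastforce
next
  assume "Suc q \<le> j"
  then have eq: "replicate j True = replicate (Suc q) True @ replicate (j - Suc q) True"
    using \<open>Suc q \<le> j\<close> by (simp only: replicate_add[symmetric]) (simp del: replicate_Suc)
  show "sublist (replicate (Suc q) True) (replicate j True)" by (subst eq) (rule sublist_append_rightI)
qed

lemma subl: "sublist (replicate (Suc q) True) (x @ False # replicate j True) \<longleftrightarrow>
   sublist (replicate (Suc q) True) x \<or> Suc q \<le> j"
proof -
  let ?r = "replicate (Suc q) True"
  have np: "\<not> prefix ?r (False # replicate j True)" by simp
  have a: "sublist ?r (False # replicate j True) \<longleftrightarrow> Suc q \<le> j"
    unfolding sublist_Cons_right using subl_rep[of q j] np by blast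
  have b: "(\<exists>xs1 xs2. ?r = xs1 @ xs2 \<and> suffix xs1 x \<and> prefix xs2 (False # replicate j True)) \<longleftrightarrow> suffix ?r x"
  proof
    assume "\<exists>xs1 xs2. ?r = xs1 @ xs2 \<and> suffix xs1 x \<and> prefix xs2 (False # replicate j True)"
    then obtain xs1 xs2 where e: "?r = xs1 @ xs2" "suffix xs1 x" "prefix xs2 (False # replicate j True)" by blast
    show "suffix ?r x"
    proof (cases xs2)
      case Nil then show ?thesis using e by simp
    next
      case (Cons c cs)
      then have "c = False" using e(3) by simp
      moreover have "c \<in> set ?r" using e(1) Cons by simp
      ultimately show ?thesis by simp
    qed
  next
    assume "suffix ?r x"
    then show "\<exists>xs1 xs2. ?r = xs1 @ xs2 \<and> suffix xs1 x \<and> prefix xs2 (False # replicate j True)"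
      by (intro exI[of _ ?r] exI[of _ "[]"]) simp
  qed
  show ?thesis unfolding sublist_append[of ?r x] a b by auto
qed

lemma subl': "sublist (True # replicate q True) (x @ False # replicate j True) \<longleftrightarrow>
   sublist (True # replicate q True) x \<or> Suc q \<le> j"
  using subl[of q x j] by simp

definition PB :: "nat \<Rightarrow> bool list \<Rightarrow> bool" where
  "PB q x = (\<not> sublist (replicate (q + 1) True) x)"

lemma Brec:
  "WS (PB q) g (m+q+1) = (\<Sum>j<q+1. WS (PB q) (\<lambda>x. g (x @ False # replicate j True)) (m+q-j))"
proof -
  let ?P = "PB q"
  define T where "T j = (\<Sum>x\<in>Lw (m+q-j). if ?P (x @ False # replicate j True) then g (x @ False # replicate j True) else 0)" for j
  have n1: "\<not> ?P (replicate (Suc (m+q)) True)" unfolding PB_def using subl_rep[of q "Suc (m+q)"] by simp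
  have "WS ?P g (m+q+1) = (\<Sum>j<(q+1)+m. T j)"
    unfolding WS_def T_def using n1 by (subst GEN) (simp add: add_ac)
  also have "\<dots> = (\<Sum>j<q+1. T j) + (\<Sum>i<m. T (q+1+i))" by (rule sum_split_add)
  also have "(\<Sum>i<m. T (q+1+i)) = 0"
    unfolding T_def PB_def by (intro sum.neutral ballI) (simp add: subl del: replicate_Suc)
  also have "(\<Sum>j<q+1. T j) = (\<Sum>j<q+1. WS (PB q) (\<lambda>x. g (x @ False # replicate j True)) (m+q-j))"
    unfolding T_def WS_def PB_def by (intro sum.cong refl) (simp add: subl')
  finally show ?thesis by simp
qed

lemma WS_add: "WS P (\<lambda>x. g x + h x) n = WS P g n + WS P h n"
  unfolding WS_def sum.distrib[symmetric] by (intro sum.cong refl) simp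

lemma WS_const: "WS P (\<lambda>x. c) n = c * WS P (\<lambda>x. 1) n"
  unfolding WS_def sum_distrib_left by (intro sum.cong refl) simp

definition cnt :: "bool list \<Rightarrow> int" where "cnt x = int (count_list x True)"

lemma count_rep: "count_list (replicate j True) True = j"
  by (induction j) auto

lemma cnt_app: "cnt (x @ False # replicate j True) = cnt x + int j"
  unfolding cnt_def by (simp add: count_rep)

lemma cnt_rep: "cnt (replicate j True) = int j"
  unfolding cnt_def by (simp add: count_rep)

lemma cnt_app2: "cnt (y @ False # False # replicate (q+i) True) = cnt (y @ False # replicate i True) + int q"
  unfolding cnt_def by (simp add: count_rep)

lemma WS_shift: "WS P (\<lambda>x. cnt (x @ False # replicate j True)) n = WS P cnt n + int j * WS P (\<lambda>x. 1) n"
  unfolding cnt_app WS_add by (subst WS_const) (rule refl)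


declare kfib.simps[simp del]

definition cW where "cW q n = WS (q_decreasing q) (\<lambda>_. 1) n"
definition uW where "uW q n = WS (q_decreasing q) cnt n"
definition cB where "cB q n = WS (PB q) (\<lambda>_. 1) n"
definition vB where "vB q n = WS (PB q) cnt n"
definition dd where "dd q n = uW q n - vB q n"
definition Kn where "Kn q n = kfib (n+q+1) (q+1)"

lemma qd_short: assumes "length x \<le> q" "1 \<le> q" shows "q_decreasing q x"
  unfolding q_decreasing_def
proof (intro allI impI)
  fix i j k assume c: "i < j \<and> j \<le> k \<and> k \<le> length x \<and> (i = 0 \<or> x ! (i - 1))
        \<and> (\<forall>t\<in>{i..<j}. \<not> x ! t) \<and> (\<forall>t\<in>{j..<k}. x ! t) \<and> (k = length x \<or> \<not> x ! k)
        \<and> (j = k \<longrightarrow> k = length x)"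
  then have ij: "i < j" and kl: "k \<le> length x" by (blast, blast)
  have "k - j < q" using ij kl assms by linarith
  also have "q * 1 \<le> q * (j - i)" using ij by (intro mult_le_mono2) simp
  finally show "k - j < q * (j - i)" by simp
qed

lemma PB_short: assumes "length x \<le> q" shows "PB q x"
  unfolding PB_def using sublist_length_le[of "replicate (q+1) True" x] assms by auto

lemma base: assumes "n \<le> q" "1 \<le> q" shows "WS (q_decreasing q) g n = WS (PB q) g n"
  unfolding WS_def
proof (intro sum.cong refl)
  fix x assume "x \<in> Lw n"
  then have "length x \<le> q" using assms by simp
  then show "(if q_decreasing q x then g x else 0) = (if PB q x then g x else 0)"
    using qd_short[of x q] PB_short[of x q] assms by simp
qed

lemma cW_rec: assumes q: "1 \<le> q" shows "cW q (m+q+1) = (\<Sum>j<q. cW q (m+q-j)) + cW q m"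
  using Wrec[OF q, of "\<lambda>_. 1" "\<lambda>_. 1" m] by (simp add: cW_def)

lemma uW_rec: assumes q: "1 \<le> q"
  shows "uW q (m+q+1) = 1 + (\<Sum>j<q. uW q (m+q-j) + int j * cW q (m+q-j)) + uW q m + int q * cW q m"
proof -
  have "WS (q_decreasing q) cnt (m+q+1) + (cnt (replicate m True) + int q) =
     cnt (replicate (m+q+1) True) + (\<Sum>j<q. WS (q_decreasing q) (\<lambda>x. cnt (x @ False # replicate j True)) (m+q-j)) + WS (q_decreasing q) (\<lambda>x. cnt x + int q) m"
    by (rule Wrec[OF q]) (rule cnt_app2)
  moreover have "WS (q_decreasing q) (\<lambda>x. cnt x + int q) m = uW q m + int q * cW q m"
    unfolding WS_add uW_def cW_def by (subst WS_const) (rule refl)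
  ultimately show ?thesis using cnt_rep[of "Suc (m+q)"] by (simp add: WS_shift cnt_rep uW_def cW_def)
qed

lemma cB_rec: "cB q (m+q+1) = (\<Sum>j<q. cB q (m+q-j)) + cB q m"
  using Brec[of q "\<lambda>_. 1" m] by (simp add: cB_def)

lemma vB_rec: "vB q (m+q+1) = (\<Sum>j<q. vB q (m+q-j) + int j * cB q (m+q-j)) + vB q m + int q * cB q m"
  using Brec[of q cnt m] by (simp add: WS_shift vB_def cB_def)

lemma CEQ: assumes q: "1 \<le> q" shows "cW q n = cB q n"
proof (induction n rule: less_induct)
  case (less n)
  show ?case
  proof (cases "n \<le> q")
    case True then show ?thesis using base[OF True q] by (simp add: cW_def cB_def)
  next
    case False
    define m where "m = n - q - 1"
    have n: "n = m+q+1" using False unfolding m_def by simp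
    have "cW q n = (\<Sum>j<q. cW q (m+q-j)) + cW q m" using cW_rec[OF q] n by simp
    also have "\<dots> = (\<Sum>j<q. cB q (m+q-j)) + cB q m"
      using less n by (intro arg_cong2[where f="(+)"] sum.cong refl) auto
    also have "\<dots> = cB q n" using cB_rec n by simp
    finally show ?thesis .
  qed
qed

lemma dd_rec: assumes q: "1 \<le> q" shows "dd q (m+q+1) = 1 + (\<Sum>j<q. dd q (m+q-j)) + dd q m"
proof -
  have "(\<Sum>j<q. uW q (m+q-j) + int j * cW q (m+q-j)) - (\<Sum>j<q. vB q (m+q-j) + int j * cB q (m+q-j))
      = (\<Sum>j<q. dd q (m+q-j))"
    unfolding sum_subtractf[symmetric] by (intro sum.cong refl) (simp add: dd_def CEQ[OF q])
  then show ?thesis unfolding dd_def uW_rec[OF q] vB_rec CEQ[OF q] by simp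
qed

lemma dd_base: assumes "n \<le> q" "1 \<le> q" shows "dd q n = 0"
  unfolding dd_def uW_def vB_def using base[OF assms] by simp

lemma kfib_pos: assumes "q \<le> a" shows "1 \<le> kfib a (q+1)"
  using assms
proof (induction a rule: less_induct)
  case (less a)
  show ?case
  proof (cases "a = q")
    case True then show ?thesis by (subst kfib.simps) simp
  next
    case False
    then have a: "q < a" using less.prems by simp
    have "kfib a (q+1) = (\<Sum>i\<in>{1..q+1}. kfib (a - i) (q+1))"
      using a by (subst kfib.simps) simp
    also have "kfib (a - 1) (q+1) \<le> \<dots>"
      by (rule member_le_sum) auto
    finally have "kfib (a - 1) (q+1) \<le> kfib a (q+1)" .
    moreover have "a - 1 < a" "q \<le> a - 1" using a by auto
    then have "1 \<le> kfib (a-1) (q+1)" by (rule less.IH)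
    ultimately show ?thesis by linarith
  qed
qed

lemma Kn_rec: "Kn q (m+q+1) = (\<Sum>j<q. Kn q (m+q-j)) + Kn q m"
proof -
  have "Kn q (m+q+1) = (\<Sum>i\<in>{1..q+1}. kfib (m+q+1+q+1 - i) (q+1))"
    unfolding Kn_def by (subst kfib.simps) simp
  also have "\<dots> = (\<Sum>k<q+1. kfib (m+q+1+q+1 - Suc k) (q+1))"
    using sum.atLeast1_atMost_eq[of "\<lambda>i. kfib (m+q+1+q+1 - i) (q+1)" "q+1"] by simp
  also have "\<dots> = (\<Sum>k<q. kfib (m+q+1+q+1 - Suc k) (q+1)) + kfib (m+q+1) (q+1)"
    by simp
  also have "(\<Sum>k<q. kfib (m+q+1+q+1 - Suc k) (q+1)) = (\<Sum>j<q. Kn q (m+q-j))"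
    unfolding Kn_def by (intro sum.cong refl) (simp add: Suc_diff_le)
  finally show ?thesis by (simp add: Kn_def)
qed

lemma bound: assumes q: "1 \<le> q" shows "0 \<le> dd q n \<and> dd q n + 1 \<le> int (Kn q n)"
proof (induction n rule: less_induct)
  case (less n)
  have Kp: "1 \<le> Kn q k" for k unfolding Kn_def by (rule kfib_pos) simp
  show ?case
  proof (cases "n \<le> q")
    case True then show ?thesis using dd_base[OF True q] Kp[of n] by simp
  next
    case False
    define m where "m = n - q - 1"
    have n: "n = m+q+1" using False unfolding m_def by simp
    have IH: "0 \<le> dd q k \<and> dd q k + 1 \<le> int (Kn q k)" if "k < n" for k using less that by blast
    have s0: "0 \<le> (\<Sum>j<q. dd q (m+q-j))" using IH n by (intro sum_nonneg) auto
    have s1: "(\<Sum>j<q. dd q (m+q-j)) \<le> (\<Sum>j<q. int (Kn q (m+q-j)) - 1)"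
      using IH n by (intro sum_mono) (auto simp: algebra_simps)
    have s2: "(\<Sum>j<q. int (Kn q (m+q-j)) - 1) = int (\<Sum>j<q. Kn q (m+q-j)) - int q"
      by (simp add: sum_subtractf)
    have dm: "0 \<le> dd q m" "dd q m + 1 \<le> int (Kn q m)" using IH n by auto
    have "int (Kn q n) = int (\<Sum>j<q. Kn q (m+q-j)) + int (Kn q m)" using Kn_rec n by simp
    then show ?thesis unfolding n dd_rec[OF q] using s0 s1 s2 dm q by linarith
  qed
qed

theorem corollary5:
  fixes q :: nat
  assumes "q \<ge> 1"
  shows "(\<lambda>n. (real (u n q) - real (v n q)) / (real n * real (kfib (n + q + 1) (q + 1))))
           \<longlonglongrightarrow> 0"
proof -
  have U: "int (u n q) = uW q n" for n
  proof -
    have e: "W q n = {x \<in> Lw n. q_decreasing q x}" by (auto simp: W_def)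
    show ?thesis unfolding u_def uW_def WS_def cnt_def e of_nat_sum sum.inter_filter[OF finL] by (intro sum.cong refl) simp
  qed
  have V: "int (v n q) = vB q n" for n
  proof -
    have e: "B q n = {x \<in> Lw n. PB q x}" by (auto simp: B_def PB_def)
    show ?thesis unfolding v_def vB_def WS_def cnt_def e of_nat_sum sum.inter_filter[OF finL] by (intro sum.cong refl) simp
  qed
  have X: "(real (u n q) - real (v n q)) / (real n * real (kfib (n + q + 1) (q + 1)))
      = real_of_int (dd q n) / (real n * real (Kn q n))" for n
  proof -
    have "real (u n q) - real (v n q) = real_of_int (int (u n q) - int (v n q))" by simp
    also have "\<dots> = real_of_int (dd q n)" using U V by (simp add: dd_def)
    finally show ?thesis by (simp add: Kn_def)
  qed
  have le: "real_of_int (dd q n) / (real n * real (Kn q n)) \<le> 1 / real n" for n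
  proof (cases "n = 0")
    case True then show ?thesis by simp
  next
    case False
    have b: "0 \<le> dd q n" "dd q n + 1 \<le> int (Kn q n)" using bound[OF assms] by auto
    have Kp: "0 < real (Kn q n)" using b by linarith
    have "real_of_int (dd q n) \<le> real (Kn q n)" using b by linarith
    then have "real_of_int (dd q n) / (real n * real (Kn q n)) \<le> real (Kn q n) / (real n * real (Kn q n))"
      using False Kp by (intro divide_right_mono) auto
    also have "\<dots> = 1 / real n" using Kp by simp
    finally show ?thesis .
  qed
  have ge: "0 \<le> real_of_int (dd q n) / (real n * real (Kn q n))" for n
    using bound[OF assms, of n] by simp
  show ?thesis unfolding X
    by (rule tendsto_sandwich[of "\<lambda>_. 0" _ sequentially "\<lambda>n. 1 / real n"])
       (auto simp: ge le lim_1_over_n)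
qed

end
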